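(* Let $\Gamma$ be a totally ordered additive abelian group, $E$ a finite set, and $\nu_{\mathsf{P}}\colon\Delta_E^r\to\overline{\Gamma}$ an $M$-convex function of rank $r$. Let $\widetilde{\nu}_{\mathsf{P}}\colon\Delta_E^{\leq r}\to\overline{\Gamma}$ be $\widetilde{\nu}_{\mathsf{P}}(\alpha)=\min\{\nu_{\mathsf{P}}(\beta)\mid\beta\in\Delta_E^r,\ \alpha_e\leq\beta_e\ \forall e\in E\}$. Let $Q$ be a finite set disjoint from $E$ and $\widetilde{E}=Q\sqcup E$, and identify $\mathbb{Z}^{\widetilde{E}}=\mathbb{Z}^Q\times\mathbb{Z}^E$. Define $\nu_{\widetilde{\mathsf{P}}}\colon\Delta_{\widetilde{E}}^r\to\overline{\Gamma}$ by $\nu_{\widetilde{\mathsf{P}}}((\alpha_Q,\alpha))=\widetilde{\nu}_{\mathsf{P}}(\alpha)$ for every $(\alpha_Q,\alpha)\in\Delta^r_{\widetilde{E}}$ with $\alpha\in\Delta_E^{\leq r}$ and $\alpha_Q\in\Delta_Q^{r-|\alpha|}$. Then $\nu_{\widetilde{\mathsf{P}}}$ is an $M$-convex function of rank $r$ on $\widetilde{E}$.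
   Context: $\overline{\Gamma}=\Gamma\sqcup\{\infty\}$ with $\infty$ larger than every element of $\Gamma$. For $s\in E$, $e_s$ is the standard basis vector of $\mathbb{Z}^E$. $|\alpha|=\sum_e\alpha_e$, $\Delta_E^k=\{\alpha\in\mathbb{Z}^E_{\ge0}\mid|\alpha|=k\}$, $\Delta_E^{\leq r}=\{\alpha\in\mathbb{Z}^E_{\ge 0}\mid |\alpha|\leq r\}$. An $M$-convex function of rank $r$ on $E$ is a map $\nu\colon\Delta_E^r\to\overline{\Gamma}$, not identically $\infty$, such that for all $\alpha,\beta\in\Delta_E^r$ and every $s\in E$ with $\alpha_s>\beta_s$ there is $t\in E$ with $\beta_t>\alpha_t$ and $\nu(\alpha)+\nu(\beta)\geq\nu(\alpha-e_s+e_t)+\nu(\beta-e_t+e_s)$. *)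

theory Defs
  imports Main
begin

datatype 'g gext = Fin 'g | Infty

fun gadd :: "'g::linordered_ab_group_add gext \<Rightarrow> 'g gext \<Rightarrow> 'g gext" where
  "gadd (Fin x) (Fin y) = Fin (x + y)"
| "gadd _ _ = Infty"

fun gle :: "'g::linordered_ab_group_add gext \<Rightarrow> 'g gext \<Rightarrow> bool" where
  "gle _ Infty = True"
| "gle Infty (Fin y) = False"
| "gle (Fin x) (Fin y) = (x \<le> y)"

text \<open>Minimum of a set in Gamma-bar (Infty if the set contains no finite value;
  used only for finite sets).\<close>
definition gmin :: "'g::linordered_ab_group_add gext set \<Rightarrow> 'g gext" where
  "gmin S = (if \<exists>x. Fin x \<in> S then Fin (Min {x. Fin x \<in> S}) else Infty)"

definition Delta :: "'e set \<Rightarrow> nat \<Rightarrow> ('e \<Rightarrow> nat) set" where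
  "Delta E k = {\<alpha>. (\<forall>x. x \<notin> E \<longrightarrow> \<alpha> x = 0) \<and> (\<Sum>e\<in>E. \<alpha> e) = k}"

definition Delta_le :: "'e set \<Rightarrow> nat \<Rightarrow> ('e \<Rightarrow> nat) set" where
  "Delta_le E r = {\<alpha>. (\<forall>x. x \<notin> E \<longrightarrow> \<alpha> x = 0) \<and> (\<Sum>e\<in>E. \<alpha> e) \<le> r}"

definition unitv :: "'e \<Rightarrow> 'e \<Rightarrow> nat" where
  "unitv s = (\<lambda>x. if x = s then 1 else 0)"

text \<open>alpha - e_s + e_t (applied only when alpha s \<ge> 1).\<close>
definition exch :: "('e \<Rightarrow> nat) \<Rightarrow> 'e \<Rightarrow> 'e \<Rightarrow> 'e \<Rightarrow> nat" where
  "exch \<alpha> s t = (\<lambda>x. \<alpha> x - unitv s x + unitv t x)"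

definition M_convex :: "'e set \<Rightarrow> nat \<Rightarrow> (('e \<Rightarrow> nat) \<Rightarrow> 'g::linordered_ab_group_add gext) \<Rightarrow> bool" where
  "M_convex E r \<nu> \<longleftrightarrow>
     (\<exists>\<alpha>\<in>Delta E r. \<nu> \<alpha> \<noteq> Infty) \<and>
     (\<forall>\<alpha>\<in>Delta E r. \<forall>\<beta>\<in>Delta E r. \<forall>s\<in>E. \<alpha> s > \<beta> s \<longrightarrow>
        (\<exists>t\<in>E. \<beta> t > \<alpha> t \<and>
           gle (gadd (\<nu> (exch \<alpha> s t)) (\<nu> (exch \<beta> t s))) (gadd (\<nu> \<alpha>) (\<nu> \<beta>))))"

definition nu_tilde :: "'e set \<Rightarrow> nat \<Rightarrow> (('e \<Rightarrow> nat) \<Rightarrow> 'g::linordered_ab_group_add gext) \<Rightarrow> ('e \<Rightarrow> nat) \<Rightarrow> 'g gext" where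
  "nu_tilde E r \<nu> \<alpha> = gmin {\<nu> \<beta> | \<beta>. \<beta> \<in> Delta E r \<and> (\<forall>e\<in>E. \<alpha> e \<le> \<beta> e)}"

definition nu_ext :: "'e set \<Rightarrow> nat \<Rightarrow> (('e \<Rightarrow> nat) \<Rightarrow> 'g::linordered_ab_group_add gext) \<Rightarrow> (('q + 'e) \<Rightarrow> nat) \<Rightarrow> 'g gext" where
  "nu_ext E r \<nu> \<gamma> = nu_tilde E r \<nu> (\<gamma> \<circ> Inr)"

end

theory Submission
  imports Defs
begin


lemma gle_Infty2[simp]: "gle x Infty" by (cases x) auto
lemma gadd_Infty2[simp]: "gadd x Infty = Infty" by (cases x) auto
lemma gle_refl[simp]: "gle x x" by (cases x) auto
lemma gle_trans: "gle x y \<Longrightarrow> gle y z \<Longrightarrow> gle x z"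
  by (cases x; cases y; cases z) auto
lemma gle_antisym: "gle x y \<Longrightarrow> gle y x \<Longrightarrow> x = y"
  by (cases x; cases y) auto
lemma gadd_comm: "gadd x y = gadd y x"
  by (cases x; cases y) (auto simp: add.commute)
lemma gadd_mono: "gle x x' \<Longrightarrow> gle y y' \<Longrightarrow> gle (gadd x y) (gadd x' y')"
  by (cases x; cases y; cases x'; cases y') (auto intro: add_mono)
lemma gle_InftyD: "gle Infty y \<Longrightarrow> y = Infty" by (cases y) auto

lemma comb:
  fixes A B C D X Y Z :: "'g::linordered_ab_group_add gext"
  assumes H1: "gle (gadd A B) (gadd C D)" and H2: "gle (gadd C X) (gadd A Y)"
    and H3: "gle (gadd Y D) (gadd C Z)" and "C \<noteq> Infty" "Z \<noteq> Infty"
  shows "gle (gadd X B) (gadd C Z)"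
proof -
  have k: "x4 + x2 \<le> x3 + x7"
    if "x1 + x2 \<le> x3 + x5" "x3 + x4 \<le> x1 + x6" "x6 + x5 \<le> x3 + x7" for x1 x2 x3 x4 x5 x6 x7 :: 'g
  proof -
    have "(x1 + x2) + (x3 + x4) + (x6 + x5) \<le> (x3 + x5) + (x1 + x6) + (x3 + x7)"
      using add_mono[OF add_mono[OF that(1) that(2)] that(3)] .
    then show ?thesis by (simp add: algebra_simps)
  qed
  show ?thesis
  using assms by (cases A; cases B; cases C; cases D; cases X; cases Y; cases Z) (auto intro: k)
qed

lemma gmin_le: "finite S \<Longrightarrow> x \<in> S \<Longrightarrow> gle (gmin S) x"
proof (cases x)
  case (Fin y)
  assume "finite S" "x \<in> S"
  have fin: "finite {x. Fin x \<in> S}" using \<open>finite S\<close>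
    by (rule finite_vimageI[where h=Fin, unfolded vimage_def]) (simp add: inj_def)
  have "y \<in> {x. Fin x \<in> S}" using Fin \<open>x\<in>S\<close> by simp
  then show ?thesis using fin Fin unfolding gmin_def by auto
qed simp

lemma gmin_in: "finite S \<Longrightarrow> S \<noteq> {} \<Longrightarrow> gmin S \<in> S"
proof -
  assume "finite S" "S \<noteq> {}"
  have fin: "finite {x. Fin x \<in> S}" using \<open>finite S\<close>
    by (rule finite_vimageI[where h=Fin, unfolded vimage_def]) (simp add: inj_def)
  show ?thesis
  proof (cases "\<exists>x. Fin x \<in> S")
    case True
    then have "{x. Fin x \<in> S} \<noteq> {}" by auto
    from Min_in[OF fin this] True show ?thesis unfolding gmin_def by auto
  next
    case False
    obtain z where "z \<in> S" using \<open>S \<noteq> {}\<close> by auto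
    then have "z = Infty" using False by (cases z) auto
    then show ?thesis using False \<open>z\<in>S\<close> unfolding gmin_def by auto
  qed
qed

lemma gmin_empty: "gmin {} = Infty" by (simp add: gmin_def)

lemma finite_Delta: assumes "finite E" shows "finite (Delta E r)"
proof -
  have "Delta E r \<subseteq> {f. \<forall>x. (x \<in> E \<longrightarrow> f x \<in> {0..r}) \<and> (x \<notin> E \<longrightarrow> f x = 0)}"
  proof
    fix f assume "f \<in> Delta E r"
    then have "\<forall>x. x \<notin> E \<longrightarrow> f x = 0" "sum f E = r" by (auto simp: Delta_def)
    moreover have "x \<in> E \<Longrightarrow> f x \<le> sum f E" for x using assms by (intro member_le_sum) auto
    ultimately show "f \<in> {f. \<forall>x. (x \<in> E \<longrightarrow> f x \<in> {0..r}) \<and> (x \<notin> E \<longrightarrow> f x = 0)}" by auto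
  qed
  then show ?thesis using finite_set_of_finite_funs[OF assms, of "{0..r}" 0] finite_subset by auto
qed



locale mset =
  fixes E :: "'e set" and r :: nat and \<nu> :: "('e \<Rightarrow> nat) \<Rightarrow> 'g::linordered_ab_group_add gext"
  assumes finE: "finite E" and Mc: "M_convex E r \<nu>"
begin

abbreviation f where "f \<equiv> nu_tilde E r \<nu>"
abbreviation sz :: "('e \<Rightarrow> nat) \<Rightarrow> nat" where "sz a \<equiv> sum a E"
definition up :: "('e \<Rightarrow> nat) \<Rightarrow> 'e \<Rightarrow> 'e \<Rightarrow> nat" where "up a u = a(u := Suc (a u))"
definition dn :: "('e \<Rightarrow> nat) \<Rightarrow> 'e \<Rightarrow> 'e \<Rightarrow> nat" where "dn a u = a(u := a u - 1)"

lemma fin_set: "finite {\<nu> \<beta> | \<beta>. \<beta> \<in> Delta E r \<and> (\<forall>e\<in>E. a e \<le> \<beta> e)}"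
proof -
  have "{\<nu> \<beta> | \<beta>. \<beta> \<in> Delta E r \<and> (\<forall>e\<in>E. a e \<le> \<beta> e)} \<subseteq> \<nu> ` Delta E r" by auto
  then show ?thesis using finite_Delta[OF finE] finite_subset by blast
qed

lemma f_le: "\<beta> \<in> Delta E r \<Longrightarrow> \<forall>e\<in>E. a e \<le> \<beta> e \<Longrightarrow> gle (f a) (\<nu> \<beta>)"
  unfolding nu_tilde_def by (rule gmin_le[OF fin_set]) auto

lemma f_attain: assumes "f a \<noteq> Infty"
  shows "\<exists>\<beta>. \<beta> \<in> Delta E r \<and> (\<forall>e\<in>E. a e \<le> \<beta> e) \<and> f a = \<nu> \<beta>"
proof -
  let ?S = "{\<nu> \<beta> | \<beta>. \<beta> \<in> Delta E r \<and> (\<forall>e\<in>E. a e \<le> \<beta> e)}"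
  have "?S \<noteq> {}" using assms gmin_empty unfolding nu_tilde_def by force
  from gmin_in[OF fin_set this] show ?thesis unfolding nu_tilde_def by auto
qed

lemma f_mono: assumes "\<forall>e\<in>E. a e \<le> a' e" shows "gle (f a) (f a')"
proof (cases "f a' = Infty")
  case False
  then obtain \<beta> where "\<beta> \<in> Delta E r" "\<forall>e\<in>E. a' e \<le> \<beta> e" "f a' = \<nu> \<beta>"
    using f_attain by blast
  then show ?thesis using f_le[of \<beta> a] assms by (metis order_trans)
qed simp

lemma f_cong: assumes "\<forall>e\<in>E. a e = a' e" shows "f a = f a'"
  using f_mono assms gle_antisym by (metis order_refl)

lemma sz_upd: "u \<in> E \<Longrightarrow> sum (a(u := x)) E + a u = sz a + x"
proof -
  assume u: "u \<in> E"
  have "sum (a(u := x)) E = x + sum (a(u := x)) (E - {u})" using sum.remove[OF finE u, of "a(u:=x)"] by simp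
  also have "sum (a(u := x)) (E - {u}) = sum a (E - {u})" by (rule sum.cong) auto
  finally show ?thesis using sum.remove[OF finE u, of a] by (simp del: fun_upd_apply)
qed

lemma sz_up: "u \<in> E \<Longrightarrow> sz (up a u) = Suc (sz a)"
  using sz_upd[of u a "Suc (a u)"] unfolding up_def by simp

lemma sz_dn: "u \<in> E \<Longrightarrow> a u > 0 \<Longrightarrow> Suc (sz (dn a u)) = sz a"
  using sz_upd[of u a "a u - 1"] unfolding dn_def by simp

lemma sz_dn_le: "u \<in> E \<Longrightarrow> sz (dn a u) \<le> sz a"
  using sz_upd[of u a "a u - 1"] unfolding dn_def by simp

lemma DL_iff: "a \<in> Delta_le E r \<longleftrightarrow> (\<forall>x. x \<notin> E \<longrightarrow> a x = 0) \<and> sz a \<le> r"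
  by (simp add: Delta_le_def)

lemma up_DL: "a \<in> Delta_le E r \<Longrightarrow> u \<in> E \<Longrightarrow> sz a < r \<Longrightarrow> up a u \<in> Delta_le E r"
  using sz_up[of u a] by (auto simp: DL_iff up_def)

lemma dn_DL: "a \<in> Delta_le E r \<Longrightarrow> u \<in> E \<Longrightarrow> dn a u \<in> Delta_le E r"
  using sz_dn_le[of u a] by (auto simp: DL_iff dn_def)

lemma sum_eq_on: "\<forall>e\<in>E. a e \<le> b e \<Longrightarrow> sz b \<le> sz a \<Longrightarrow> \<forall>e\<in>E. a e = b e"
  using sum_strict_mono_ex1[OF finE, of a b] by (meson le_less not_le)

lemma f_top: assumes "a \<in> Delta E r" shows "f a = \<nu> a"
proof -
  have 1: "gle (f a) (\<nu> a)" using f_le[OF assms] by simp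
  show ?thesis
  proof (cases "f a = Infty")
    case True then show ?thesis using 1 gle_InftyD by metis
  next
    case False
    then obtain \<beta> where b: "\<beta> \<in> Delta E r" "\<forall>e\<in>E. a e \<le> \<beta> e" "f a = \<nu> \<beta>"
      using f_attain by blast
    have "\<forall>e\<in>E. a e = \<beta> e" using sum_eq_on[OF b(2)] b(1) assms by (simp add: Delta_def)
    then have "a = \<beta>" using b(1) assms unfolding Delta_def
      by (intro ext) (metis (mono_tags, lifting) mem_Collect_eq)
    then show ?thesis using b by simp
  qed
qed

lemma f_expand: assumes "a \<in> Delta_le E r" "sz a < r" "f a \<noteq> Infty"
  shows "\<exists>u\<in>E. f (up a u) = f a"
proof -
  obtain \<beta> where b: "\<beta> \<in> Delta E r" "\<forall>e\<in>E. a e \<le> \<beta> e" "f a = \<nu> \<beta>"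
    using f_attain assms(3) by blast
  have "\<exists>u\<in>E. a u < \<beta> u"
  proof (rule ccontr)
    assume "\<not> ?thesis"
    then have "\<forall>e\<in>E. \<beta> e \<le> a e" by auto
    then have "sz \<beta> \<le> sz a" by (intro sum_mono) auto
    then show False using b(1) assms(2) by (simp add: Delta_def)
  qed
  then obtain u where u: "u \<in> E" "a u < \<beta> u" by blast
  have "gle (f (up a u)) (f a)" using f_le[OF b(1), of "up a u"] b u by (auto simp: up_def)
  moreover have "gle (f a) (f (up a u))" by (rule f_mono) (simp add: up_def)
  ultimately show ?thesis using u gle_antisym by blast
qed

end

context mset begin

definition PA where "PA a b \<longleftrightarrow> sz a < sz b \<longrightarrow>
  (\<exists>t\<in>E. a t < b t \<and> gle (gadd (f (up a t)) (f (dn b t))) (gadd (f a) (f b)))"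
definition PB where "PB a b s \<longleftrightarrow> b s < a s \<longrightarrow>
  (\<exists>t\<in>E. a t < b t \<and> gle (gadd (f (up (dn a s) t)) (f (up (dn b t) s))) (gadd (f a) (f b))) \<or>
  (sz b < sz a \<and> gle (gadd (f (dn a s)) (f (up b s))) (gadd (f a) (f b)))"
definition IHn where "IHn n \<longleftrightarrow> (\<forall>a b. a \<in> Delta_le E r \<longrightarrow> b \<in> Delta_le E r \<longrightarrow>
   2*r - sz a - sz b < n \<longrightarrow> PA a b \<and> (\<forall>s\<in>E. PB a b s))"

lemma IHA: "IHn n \<Longrightarrow> a \<in> Delta_le E r \<Longrightarrow> b \<in> Delta_le E r \<Longrightarrow> 2*r - sz a - sz b < n \<Longrightarrow> PA a b"
  unfolding IHn_def by blast
lemma IHB: "IHn n \<Longrightarrow> a \<in> Delta_le E r \<Longrightarrow> b \<in> Delta_le E r \<Longrightarrow> 2*r - sz a - sz b < n \<Longrightarrow> s \<in> E \<Longrightarrow> PB a b s"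
  unfolding IHn_def by blast

lemma exists_bigger: "sz a \<le> sz b \<Longrightarrow> s \<in> E \<Longrightarrow> b s < a s \<Longrightarrow> \<exists>t\<in>E. a t < b t"
proof (rule ccontr)
  assume "sz a \<le> sz b" "s \<in> E" "b s < a s" "\<not> (\<exists>t\<in>E. a t < b t)"
  then have "sz b < sz a" by (intro sum_strict_mono_ex1[OF finE]) (auto simp: not_less)
  then show False using \<open>sz a \<le> sz b\<close> by simp
qed

lemma exists_bigger2: "sz a < sz b \<Longrightarrow> \<exists>t\<in>E. a t < b t"
proof (rule ccontr)
  assume "sz a < sz b" "\<not> (\<exists>t\<in>E. a t < b t)"
  then have "sz b \<le> sz a" by (intro sum_mono) (auto simp: not_less)
  then show False using \<open>sz a < sz b\<close> by simp
qed

lemma stepA: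
  assumes IH: "IHn n" and a: "a \<in> Delta_le E r" and b: "b \<in> Delta_le E r"
    and n: "2*r - sz a - sz b = n"
  shows "PA a b"
  unfolding PA_def
proof
  assume lt: "sz a < sz b"
  show "\<exists>t\<in>E. a t < b t \<and> gle (gadd (f (up a t)) (f (dn b t))) (gadd (f a) (f b))"
  proof (cases "f a = Infty \<or> f b = Infty")
    case True
    then show ?thesis using exists_bigger2[OF lt] by auto
  next
    case False
    have szb: "sz b \<le> r" using b by (simp add: DL_iff)
    obtain u where u: "u \<in> E" "f (up a u) = f a" using f_expand[OF a] lt szb False by force
    show ?thesis
    proof (cases "a u < b u")
      case True
      have "gle (f (dn b u)) (f b)" by (rule f_mono) (auto simp: dn_def)
      then show ?thesis using u True gadd_mono[OF gle_refl] by metis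
    next
      case False
      have aDL: "up a u \<in> Delta_le E r" using up_DL[OF a u(1)] lt szb by simp
      have "PB (up a u) b u" using IHB[OF IH aDL b _ u(1)] sz_up[OF u(1)] lt szb n by simp
      moreover have "b u < up a u u" using False by (simp add: up_def)
      ultimately consider
          t where "t \<in> E" "up a u t < b t"
            "gle (gadd (f (up (dn (up a u) u) t)) (f (up (dn b t) u))) (gadd (f (up a u)) (f b))"
        | "sz b < sz (up a u)"
        unfolding PB_def by blast
      then show ?thesis
      proof cases
        case 1
        have tu: "t \<noteq> u" using 1 False by (auto simp: up_def)
        have e1: "up (dn (up a u) u) t = up a t" by (simp add: up_def dn_def)
        have "gle (f (dn b t)) (f (up (dn b t) u))" by (rule f_mono) (auto simp: dn_def up_def)
        then have "gle (gadd (f (up a t)) (f (dn b t))) (gadd (f a) (f b))"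
          using 1(3) e1 u(2) gadd_mono[OF gle_refl] gle_trans by metis
        then show ?thesis using 1 tu by (auto simp: up_def)
      next
        case 2
        then show ?thesis using sz_up[OF u(1)] lt by simp
      qed
    qed
  qed
qed

end

context mset begin

lemma stepB1:
  assumes IH: "IHn n" and a: "a \<in> Delta_le E r" and b: "b \<in> Delta_le E r"
    and n: "2*r - sz a - sz b = n" and s: "s \<in> E" and as: "b s < a s"
    and fa: "f a \<noteq> Infty" and fb: "f b \<noteq> Infty" and szar: "sz a < r"
  shows "(\<exists>t\<in>E. a t < b t \<and> gle (gadd (f (up (dn a s) t)) (f (up (dn b t) s))) (gadd (f a) (f b))) \<or>
    (sz b < sz a \<and> gle (gadd (f (dn a s)) (f (up b s))) (gadd (f a) (f b)))"
proof -
  have szb: "sz b \<le> r" using b by (simp add: DL_iff)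
  obtain u where u: "u \<in> E" "f (up a u) = f a" using f_expand[OF a szar fa] by blast
  have aDL: "up a u \<in> Delta_le E r" using up_DL[OF a u(1) szar] .
  have "PB (up a u) b s" using IHB[OF IH aDL b _ s] sz_up[OF u(1)] szar szb n by simp
  moreover have "b s < up a u s" using as by (auto simp: up_def)
  ultimately consider
      t where "t \<in> E" "up a u t < b t"
        "gle (gadd (f (up (dn (up a u) s) t)) (f (up (dn b t) s))) (gadd (f (up a u)) (f b))"
    | "sz b < sz (up a u)" "gle (gadd (f (dn (up a u) s)) (f (up b s))) (gadd (f (up a u)) (f b))"
    unfolding PB_def by blast
  then show ?thesis
  proof cases
    case 1
    have "gle (f (up (dn a s) t)) (f (up (dn (up a u) s) t))"
      by (rule f_mono) (auto simp: up_def dn_def)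
    then have "gle (gadd (f (up (dn a s) t)) (f (up (dn b t) s))) (gadd (f a) (f b))"
      using 1(3) u(2) gadd_mono[OF _ gle_refl] gle_trans by metis
    moreover have "a t < b t" using 1(2) by (auto simp: up_def split: if_splits)
    ultimately show ?thesis using 1(1) by blast
  next
    case 2
    note H3' = 2(2)
    have H3: "gle (gadd (f (dn (up a u) s)) (f (up b s))) (gadd (f a) (f b))" using H3' u(2) by simp
    show ?thesis
    proof (cases "sz b < sz a")
      case True
      have "gle (f (dn a s)) (f (dn (up a u) s))" by (rule f_mono) (auto simp: up_def dn_def)
      then show ?thesis using H3 True gadd_mono[OF _ gle_refl] gle_trans by metis
    next
      case False
      then have eq: "sz b = sz a" using 2(1) sz_up[OF u(1)] by simp
      show ?thesis
      proof (cases "u \<noteq> s \<and> a u < b u")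
        case True
        have e1: "f (up (dn a s) u) = f (dn (up a u) s)" by (rule f_cong) (use True in \<open>auto simp: up_def dn_def\<close>)
        have "gle (f (up (dn b u) s)) (f (up b s))" by (rule f_mono) (auto simp: up_def dn_def)
        then have "gle (gadd (f (up (dn a s) u)) (f (up (dn b u) s))) (gadd (f a) (f b))"
          using H3 e1 gadd_mono[OF gle_refl] gle_trans by metis
        then show ?thesis using True u(1) by blast
      next
        case False
        then have uc: "u = s \<or> b u \<le> a u" by auto
        have bDL: "up b s \<in> Delta_le E r" using up_DL[OF b s] eq szar by simp
        have "PA a (up b s)" using IHA[OF IH a bDL] sz_up[OF s, of b] eq szar n by simp
        then obtain t where t: "t \<in> E" "a t < up b s t"
          and H1: "gle (gadd (f (up a t)) (f (dn (up b s) t))) (gadd (f a) (f (up b s)))"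
          unfolding PA_def using sz_up[OF s, of b] eq by auto
        have ts: "t \<noteq> s" using t(2) as by (auto simp: up_def)
        have bt: "a t < b t" using t(2) ts by (simp add: up_def)
        have tu: "t \<noteq> u" using uc ts bt by auto
        have H2: "gle (gadd (f a) (f (up (dn a s) t))) (gadd (f (up a t)) (f (dn (up a u) s)))"
        proof (cases "u = s")
          case True
          have e: "f (dn (up a u) s) = f a" by (rule f_cong) (use True in \<open>auto simp: up_def dn_def\<close>)
          have "gle (f (up (dn a s) t)) (f (up a t))" by (rule f_mono) (auto simp: up_def dn_def)
          then show ?thesis using e gadd_mono[OF gle_refl] gadd_comm by metis
        next
          case False
          have a1: "up a t \<in> Delta_le E r" using up_DL[OF a t(1) szar] .
          have a2: "dn (up a u) s \<in> Delta_le E r" using dn_DL[OF aDL s] .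
          have "Suc (sz (dn (up a u) s)) = sz (up a u)" by (rule sz_dn[OF s]) (use as in \<open>simp add: up_def\<close>)
          then have sz2: "sz (dn (up a u) s) = sz a" using sz_up[OF u(1)] by simp
          have "PB (up a t) (dn (up a u) s) t"
            using IHB[OF IH a1 a2 _ t(1)] sz2 sz_up[OF t(1), of a] szar n eq by simp
          moreover have "dn (up a u) s t < up a t t" using ts tu by (simp add: up_def dn_def)
          ultimately consider
              t' where "t' \<in> E" "up a t t' < dn (up a u) s t'"
                "gle (gadd (f (up (dn (up a t) t) t')) (f (up (dn (dn (up a u) s) t') t)))
                   (gadd (f (up a t)) (f (dn (up a u) s)))"
            | "gle (gadd (f (dn (up a t) t)) (f (up (dn (up a u) s) t)))
                   (gadd (f (up a t)) (f (dn (up a u) s)))"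
            unfolding PB_def by blast
          then show ?thesis
          proof cases
            case 1
            have t'u: "t' = u" using 1(2) by (auto simp: up_def dn_def split: if_splits)
            have e1: "f (up (dn (up a t) t) t') = f a" using t'u u(2)
              by (metis (no_types) dn_def up_def fun_upd_same fun_upd_upd diff_Suc_1 fun_upd_triv)
            have e2: "f (up (dn (dn (up a u) s) t') t) = f (up (dn a s) t)"
              by (rule f_cong) (use t'u False tu ts in \<open>auto simp: up_def dn_def\<close>)
            show ?thesis using 1(3) e1 e2 by simp
          next
            case 2
            have e1: "dn (up a t) t = a" by (simp add: up_def dn_def)
            have "gle (f (up (dn a s) t)) (f (up (dn (up a u) s) t))"
              by (rule f_mono) (auto simp: up_def dn_def)
            then show ?thesis using 2 e1 gadd_mono[OF gle_refl] gle_trans by metis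
          qed
        qed
        have eB: "f (dn (up b s) t) = f (up (dn b t) s)"
          by (rule f_cong) (use ts in \<open>auto simp: up_def dn_def\<close>)
        have "gle (gadd (f (up (dn a s) t)) (f (dn (up b s) t))) (gadd (f a) (f b))"
          by (rule comb[OF H1 H2 H3 fa fb])
        then show ?thesis using eB t(1) bt by auto
      qed
    qed
  qed
qed

end

context mset begin

lemma stepB2:
  assumes IH: "IHn n" and a: "a \<in> Delta_le E r" and b: "b \<in> Delta_le E r"
    and n: "2*r - sz a - sz b = n" and s: "s \<in> E" and as: "b s < a s"
    and fb: "f b \<noteq> Infty" and szar: "sz a = r" and szbr: "sz b < r"
  shows "(\<exists>t\<in>E. a t < b t \<and> gle (gadd (f (up (dn a s) t)) (f (up (dn b t) s))) (gadd (f a) (f b))) \<or>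
    (sz b < sz a \<and> gle (gadd (f (dn a s)) (f (up b s))) (gadd (f a) (f b)))"
proof -
  obtain v where v: "v \<in> E" "f (up b v) = f b" using f_expand[OF b szbr fb] by blast
  have dna: "gle (f (dn a s)) (f a)" by (rule f_mono) (auto simp: dn_def)
  show ?thesis
  proof (cases "v = s")
    case True
    then show ?thesis using v dna szar szbr gadd_mono[OF _ gle_refl] by metis
  next
    case False
    have bDL: "up b v \<in> Delta_le E r" using up_DL[OF b v(1) szbr] .
    have "PB a (up b v) s" using IHB[OF IH a bDL _ s] sz_up[OF v(1), of b] szar szbr n by simp
    moreover have "up b v s < a s" using as False by (simp add: up_def)
    ultimately consider
        t where "t \<in> E" "a t < up b v t"
          "gle (gadd (f (up (dn a s) t)) (f (up (dn (up b v) t) s))) (gadd (f a) (f (up b v)))"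
      | "gle (gadd (f (dn a s)) (f (up (up b v) s))) (gadd (f a) (f (up b v)))"
      unfolding PB_def by blast
    then show ?thesis
    proof cases
      case 1
      show ?thesis
      proof (cases "t = v")
        case True
        have e: "up (dn (up b v) t) s = up b s" using True by (simp add: up_def dn_def)
        have "gle (f (dn a s)) (f (up (dn a s) t))" by (rule f_mono) (auto simp: up_def dn_def)
        then have "gle (gadd (f (dn a s)) (f (up b s))) (gadd (f a) (f b))"
          using 1(3) e v(2) gadd_mono[OF _ gle_refl] gle_trans by metis
        then show ?thesis using szar szbr by auto
      next
        case False
        have bt: "a t < b t" using 1(2) False by (simp add: up_def)
        have "gle (f (up (dn b t) s)) (f (up (dn (up b v) t) s))" by (rule f_mono) (auto simp: up_def dn_def)
        then have "gle (gadd (f (up (dn a s) t)) (f (up (dn b t) s))) (gadd (f a) (f b))"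
          using 1(3) v(2) gadd_mono[OF gle_refl] gle_trans by metis
        then show ?thesis using bt 1(1) by blast
      qed
    next
      case 2
      have "gle (f (up b s)) (f (up (up b v) s))" by (rule f_mono) (auto simp: up_def dn_def)
      then have "gle (gadd (f (dn a s)) (f (up b s))) (gadd (f a) (f b))"
        using 2 v(2) gadd_mono[OF gle_refl] gle_trans by metis
      then show ?thesis using szar szbr by auto
    qed
  qed
qed

lemma exch_eq: "t \<noteq> s \<Longrightarrow> 0 < a s \<Longrightarrow> exch a s t = up (dn a s) t"
  by (rule ext) (auto simp: exch_def unitv_def up_def dn_def)

lemma upDelta: assumes "a \<in> Delta E r" "s \<in> E" "t \<in> E" "0 < a s"
  shows "up (dn a s) t \<in> Delta E r"
proof -
  have "sz (up (dn a s) t) = sz a" using sz_up[OF assms(3)] sz_dn[of s a, OF assms(2,4)] by simp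
  then show ?thesis using assms by (auto simp: Delta_def up_def dn_def)
qed

lemma stepB3:
  assumes a: "a \<in> Delta_le E r" and b: "b \<in> Delta_le E r"
    and s: "s \<in> E" and as: "b s < a s" and szar: "sz a = r" and szbr: "sz b = r"
  shows "\<exists>t\<in>E. a t < b t \<and> gle (gadd (f (up (dn a s) t)) (f (up (dn b t) s))) (gadd (f a) (f b))"
proof -
  have aD: "a \<in> Delta E r" and bD: "b \<in> Delta E r"
    using a b szar szbr by (auto simp: Delta_def DL_iff)
  obtain t where t: "t \<in> E" "a t < b t"
    "gle (gadd (\<nu> (exch a s t)) (\<nu> (exch b t s))) (gadd (\<nu> a) (\<nu> b))"
    using Mc aD bD s as unfolding M_convex_def by blast
  have ts: "t \<noteq> s" using t(2) as by auto
  have e1: "exch a s t = up (dn a s) t" using ts as by (intro exch_eq) auto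
  have e2: "exch b t s = up (dn b t) s" using ts t(2) by (intro exch_eq) auto
  have "f (up (dn a s) t) = \<nu> (up (dn a s) t)" using upDelta[OF aD s t(1)] as by (intro f_top) auto
  moreover have "f (up (dn b t) s) = \<nu> (up (dn b t) s)" using upDelta[OF bD t(1) s] t(2) by (intro f_top) auto
  ultimately show ?thesis using t e1 e2 f_top[OF aD] f_top[OF bD] by auto
qed

lemma stepB:
  assumes IH: "IHn n" and a: "a \<in> Delta_le E r" and b: "b \<in> Delta_le E r"
    and n: "2*r - sz a - sz b = n" and s: "s \<in> E"
  shows "PB a b s"
  unfolding PB_def
proof
  assume as: "b s < a s"
  have sza: "sz a \<le> r" and szb: "sz b \<le> r" using a b by (auto simp: DL_iff)
  show "(\<exists>t\<in>E. a t < b t \<and> gle (gadd (f (up (dn a s) t)) (f (up (dn b t) s))) (gadd (f a) (f b))) \<or>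
    (sz b < sz a \<and> gle (gadd (f (dn a s)) (f (up b s))) (gadd (f a) (f b)))"
  proof (cases "f a = Infty \<or> f b = Infty")
    case True
    show ?thesis
    proof (cases "sz b < sz a")
      case True then show ?thesis using \<open>f a = Infty \<or> f b = Infty\<close> by auto
    next
      case False
      then show ?thesis using exists_bigger[of a b s] s as \<open>f a = Infty \<or> f b = Infty\<close> by auto
    qed
  next
    case False
    show ?thesis
    proof (cases "sz a < r")
      case True then show ?thesis using stepB1[OF IH a b n s as] False by blast
    next
      case c2: False
      show ?thesis
      proof (cases "sz b < r")
        case True then show ?thesis using stepB2[OF IH a b n s as] False c2 sza by force
      next
        case False then show ?thesis using stepB3[OF a b s as] c2 sza szb by force
      qed
    qed
  qed
qed

lemma main: "a \<in> Delta_le E r \<Longrightarrow> b \<in> Delta_le E r \<Longrightarrow> PA a b \<and> (\<forall>s\<in>E. PB a b s)"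
proof -
  have "\<And>a b. a \<in> Delta_le E r \<Longrightarrow> b \<in> Delta_le E r \<Longrightarrow> 2*r - sz a - sz b = n \<Longrightarrow> PA a b \<and> (\<forall>s\<in>E. PB a b s)" for n
  proof (induction n rule: less_induct)
    case (less n)
    have "IHn n" unfolding IHn_def using less.IH by blast
    then show ?case using stepA stepB less.prems by blast
  qed
  then show "a \<in> Delta_le E r \<Longrightarrow> b \<in> Delta_le E r \<Longrightarrow> PA a b \<and> (\<forall>s\<in>E. PB a b s)" by blast
qed

end

context mset begin

lemma c1: "exch \<gamma> (Inl q) (Inl q') \<circ> Inr = \<gamma> \<circ> Inr"
  by (rule ext) (simp add: exch_def unitv_def)
lemma c2: "exch \<gamma> (Inl q) (Inr t) \<circ> Inr = up (\<gamma> \<circ> Inr) t"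
  by (rule ext) (simp add: exch_def unitv_def up_def)
lemma c3: "exch \<gamma> (Inr t) (Inl q) \<circ> Inr = dn (\<gamma> \<circ> Inr) t"
  by (rule ext) (simp add: exch_def unitv_def dn_def)
lemma c4: "t \<noteq> e \<Longrightarrow> exch \<gamma> (Inr e) (Inr t) \<circ> Inr = up (dn (\<gamma> \<circ> Inr) e) t"
  by (rule ext) (auto simp: exch_def unitv_def up_def dn_def)

lemma ext_thm:
  assumes finQ: "finite Q"
  shows "M_convex (Q <+> E) r (nu_ext E r \<nu> :: ('q + 'e \<Rightarrow> nat) \<Rightarrow> 'g gext)"
  unfolding M_convex_def
proof (intro conjI ballI impI)
  obtain \<beta> where \<beta>: "\<beta> \<in> Delta E r" "\<nu> \<beta> \<noteq> Infty" using Mc unfolding M_convex_def by blast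
  define \<gamma> :: "'q + 'e \<Rightarrow> nat" where "\<gamma> = case_sum (\<lambda>_. 0) \<beta>"
  have "\<gamma> \<circ> Inr = \<beta>" by (rule ext) (simp add: \<gamma>_def)
  moreover have "\<gamma> \<circ> Inl = (\<lambda>_. 0)" by (rule ext) (simp add: \<gamma>_def)
  ultimately have "\<gamma> \<in> Delta (Q <+> E) r"
    using \<beta>(1) sum.Plus[OF finQ finE, of \<gamma>] unfolding Delta_def
    by (auto simp: \<gamma>_def split: sum.splits)
  moreover have "nu_ext E r \<nu> \<gamma> \<noteq> Infty"
    using \<open>\<gamma> \<circ> Inr = \<beta>\<close> f_top[OF \<beta>(1)] \<beta>(2) by (simp add: nu_ext_def)
  ultimately show "\<exists>\<alpha>\<in>Delta (Q <+> E) r. nu_ext E r \<nu> \<alpha> \<noteq> Infty" by blast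
next
  fix \<gamma> \<delta> :: "'q + 'e \<Rightarrow> nat" and \<sigma>
  assume g: "\<gamma> \<in> Delta (Q <+> E) r" and d: "\<delta> \<in> Delta (Q <+> E) r"
    and \<sigma>: "\<sigma> \<in> Q <+> E" and gs: "\<delta> \<sigma> < \<gamma> \<sigma>"
  define a where "a = \<gamma> \<circ> Inr"
  define b where "b = \<delta> \<circ> Inr"
  define qa where "qa = sum (\<gamma> \<circ> Inl) Q"
  define qb where "qb = sum (\<delta> \<circ> Inl) Q"
  have ga: "qa + sz a = r" using g sum.Plus[OF finQ finE, of \<gamma>]
    by (simp add: Delta_def qa_def a_def)
  have gb: "qb + sz b = r" using d sum.Plus[OF finQ finE, of \<delta>]
    by (simp add: Delta_def qb_def b_def)
  have aDL: "a \<in> Delta_le E r" using g ga by (auto simp: Delta_def DL_iff a_def)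
  have bDL: "b \<in> Delta_le E r" using d gb by (auto simp: Delta_def DL_iff b_def)
  have PA: "PA a b" and PB: "\<forall>s\<in>E. PB a b s" using main[OF aDL bDL] by auto
  let ?N = "nu_ext E r \<nu> :: ('q + 'e \<Rightarrow> nat) \<Rightarrow> 'g gext"
  have N: "?N x = f (x \<circ> Inr)" for x by (simp add: nu_ext_def)
  show "\<exists>t\<in>Q <+> E. \<gamma> t < \<delta> t \<and> gle (gadd (?N (exch \<gamma> \<sigma> t)) (?N (exch \<delta> t \<sigma>))) (gadd (?N \<gamma>) (?N \<delta>))"
  proof (cases \<sigma>)
    case (Inl q)
    have q: "q \<in> Q" using \<sigma> Inl by auto
    show ?thesis
    proof (cases "\<exists>q'\<in>Q. \<gamma> (Inl q') < \<delta> (Inl q')")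
      case True
      then obtain q' where "q' \<in> Q" "\<gamma> (Inl q') < \<delta> (Inl q')" by blast
      then show ?thesis using Inl by (intro bexI[of _ "Inl q'"]) (auto simp: N c1)
    next
      case False
      have "qb < qa" unfolding qa_def qb_def
        using False gs Inl q by (intro sum_strict_mono_ex1[OF finQ]) (auto simp: not_less)
      then have "sz a < sz b" using ga gb by simp
      then obtain t where "t \<in> E" "a t < b t" "gle (gadd (f (up a t)) (f (dn b t))) (gadd (f a) (f b))"
        using PA unfolding PA_def by blast
      then show ?thesis using Inl
        by (intro bexI[of _ "Inr t"]) (auto simp: N c2 c3 a_def b_def)
    qed
  next
    case (Inr e)
    have e: "e \<in> E" using \<sigma> Inr by auto
    have "b e < a e" using gs Inr by (simp add: a_def b_def)
    then consider t where "t \<in> E" "a t < b t"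
        "gle (gadd (f (up (dn a e) t)) (f (up (dn b t) e))) (gadd (f a) (f b))"
      | "sz b < sz a" "gle (gadd (f (dn a e)) (f (up b e))) (gadd (f a) (f b))"
      using PB e unfolding PB_def by blast
    then show ?thesis
    proof cases
      case 1
      have "t \<noteq> e" using 1(2) \<open>b e < a e\<close> by auto
      then show ?thesis using 1 Inr
        by (intro bexI[of _ "Inr t"]) (auto simp: N c4 a_def b_def)
    next
      case 2
      then have "qa < qb" using ga gb by simp
      have "\<exists>q\<in>Q. \<gamma> (Inl q) < \<delta> (Inl q)"
      proof (rule ccontr)
        assume "\<not> ?thesis"
        then have "qb \<le> qa" unfolding qa_def qb_def by (intro sum_mono) (auto simp: not_less)
        then show False using \<open>qa < qb\<close> by simp
      qed
      then obtain q where "q \<in> Q" "\<gamma> (Inl q) < \<delta> (Inl q)" by blast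
      then show ?thesis using 2 Inr
        by (intro bexI[of _ "Inl q"]) (auto simp: N c2 c3 a_def b_def)
    qed
  qed
qed

end

theorem proposition1p3:
  fixes E :: "'e set" and Q :: "'q set" and r :: nat
    and \<nu> :: "('e \<Rightarrow> nat) \<Rightarrow> 'g::linordered_ab_group_add gext"
  assumes "finite E" and "finite Q"
    and "M_convex E r \<nu>"
  shows "M_convex (Q <+> E) r (nu_ext E r \<nu> :: ('q + 'e \<Rightarrow> nat) \<Rightarrow> 'g gext)"
proof -
  interpret mset E r \<nu> using assms(1,3) by unfold_locales
  show ?thesis using ext_thm[OF assms(2)] .
qed


end
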